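(* Let $h$ be a positive integer and $L$ an $h$-modular lattice with zero. Let $\mathcal{A}$ be the set of all antitone maps $x\colon \mathrm{J}(K)\to L$ with finite range. Then for every $x\in\mathcal{A}$, the map $x^{(1)}$ also belongs to $\mathcal{A}$.
   Context: $K$ is the lattice whose join-irreducible elements are $c$, $a_n$, $b_n$ ($n<\omega$): concretely, with $A_m=\{a_k:k\geq m\}$, $B_n=\{b_k:k\geq n\}$, $C=\{c\}$, $K$ consists of $\varnothing$, $C$, all $A_m$, all $B_n$, and all $C\cup A_m\cup B_n$ with $|m-n|\leq1$, ordered by inclusion, and $a_n$, $b_n$, $c$ are identified with $A_n$, $B_n$, $C$. Thus $\mathrm{J}(K)=\{c\}\cup\{a_n\}\cup\{b_n\}$ with $a_0>a_1>\cdots$, $b_0>b_1>\cdots$, and no other comparabilities. A map $x$ is antitone if $p\leq q$ implies $x(p)\geq x(q)$. For $x\in\mathcal{A}$ the sequences $(x(a_n))$, $(x(b_n))$ are increasing and eventually constant; denote their limits by $x(a_\infty)$, $x(b_\infty)$. Define $x^{(1)}\colon\mathrm{J}(K)\to L$ by $x^{(1)}(c)=x(c)\vee(x(a_\infty)\wedge x(b_\infty))$, $x^{(1)}(a_0)=x(a_0)$, $x^{(1)}(b_0)=x(b_0)$, $x^{(1)}(a_{n+1})=x(a_{n+1})\vee(x(b_n)\wedge x(c))$, $x^{(1)}(b_{n+1})=x(b_{n+1})\vee(x(a_n)\wedge x(c))$ for $n<\omega$. A lattice $L$ is $h$-modular if $u^{(h+1)}=u^{(h)}$ for all $u\in L^3$,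 where $\langle x,y,z\rangle^{(1)}=\langle x\vee(y\wedge z),y\vee(x\wedge z),z\vee(x\wedge y)\rangle$ and $u^{(k+1)}=(u^{(k)})^{(1)}$. *)

theory Defs
  imports Main
begin

datatype jk = C | A nat | B nat

definition jk_le :: "jk \<Rightarrow> jk \<Rightarrow> bool" where
  "jk_le p q \<longleftrightarrow> p = q \<or> (\<exists>m n. p = A m \<and> q = A n \<and> n \<le> m)
                          \<or> (\<exists>m n. p = B m \<and> q = B n \<and> n \<le> m)"

definition antitone_jk :: "(jk \<Rightarrow> 'a::order) \<Rightarrow> bool" where
  "antitone_jk x \<longleftrightarrow> (\<forall>p q. jk_le p q \<longrightarrow> x q \<le> x p)"

definition AA :: "(jk \<Rightarrow> 'a::order) set" where
  "AA = {x. antitone_jk x \<and> finite (range x)}"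

definition a_inf :: "(jk \<Rightarrow> 'a) \<Rightarrow> 'a" where
  "a_inf x = (THE v. \<exists>N. \<forall>n\<ge>N. x (A n) = v)"

definition b_inf :: "(jk \<Rightarrow> 'a) \<Rightarrow> 'a" where
  "b_inf x = (THE v. \<exists>N. \<forall>n\<ge>N. x (B n) = v)"

definition x1 :: "(jk \<Rightarrow> 'a::lattice) \<Rightarrow> jk \<Rightarrow> 'a" where
  "x1 x p = (case p of
      C \<Rightarrow> sup (x C) (inf (a_inf x) (b_inf x))
    | A 0 \<Rightarrow> x (A 0)
    | B 0 \<Rightarrow> x (B 0)
    | A (Suc n) \<Rightarrow> sup (x (A (Suc n))) (inf (x (B n)) (x C))
    | B (Suc n) \<Rightarrow> sup (x (B (Suc n))) (inf (x (A n)) (x C)))"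

definition tstep :: "'a::lattice \<times> 'a \<times> 'a \<Rightarrow> 'a \<times> 'a \<times> 'a" where
  "tstep u = (case u of (x, y, z) \<Rightarrow>
      (sup x (inf y z), sup y (inf x z), sup z (inf x y)))"

definition h_modular :: "'a::lattice itself \<Rightarrow> nat \<Rightarrow> bool" where
  "h_modular _ h \<longleftrightarrow> (\<forall>u::'a \<times> 'a \<times> 'a. (tstep ^^ Suc h) u = (tstep ^^ h) u)"

end

theory Submission
  imports Defs
begin

lemma x1_fin:
  fixes x :: "jk \<Rightarrow> 'a::lattice"
  assumes "finite (range x)"
  shows "finite (range (x1 x))"
proof -
  let ?S = "range x"
  have "range (x1 x) \<subseteq> insert (x1 x C) (?S \<union> (\<lambda>(a,b,c). sup a (inf b c)) ` (?S \<times> ?S \<times> ?S))"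
  proof
    fix v assume "v \<in> range (x1 x)"
    then obtain p where v: "v = x1 x p" by auto
    show "v \<in> insert (x1 x C) (?S \<union> (\<lambda>(a,b,c). sup a (inf b c)) ` (?S \<times> ?S \<times> ?S))"
    proof (cases p)
      case C then show ?thesis using v by simp
    next
      case (A n) then show ?thesis using v
        by (cases n) (auto simp: x1_def image_iff)
    next
      case (B n) then show ?thesis using v
        by (cases n) (auto simp: x1_def image_iff)
    qed
  qed
  moreover have "finite (insert (x1 x C) (?S \<union> (\<lambda>(a,b,c). sup a (inf b c)) ` (?S \<times> ?S \<times> ?S)))"
    using assms by auto
  ultimately show ?thesis using finite_subset by blast
qed

lemma x1_anti:
  fixes x :: "jk \<Rightarrow> 'a::lattice"
  assumes "antitone_jk x"
  shows "antitone_jk (x1 x)"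
proof -
  have xa: "x (A n) \<le> x (A (Suc n))" for n
    using assms unfolding antitone_jk_def jk_le_def by (metis le_SucI order_refl)
  have xb: "x (B n) \<le> x (B (Suc n))" for n
    using assms unfolding antitone_jk_def jk_le_def by (metis le_SucI order_refl)
  have sa: "x1 x (A n) \<le> x1 x (A (Suc n))" for n
  proof (cases n)
    case 0 then show ?thesis using xa[of 0] by (simp add: x1_def le_supI1)
  next
    case (Suc k)
    have "inf (x (B k)) (x C) \<le> inf (x (B (Suc k))) (x C)"
      using xb[of k] by (meson inf_mono order_refl)
    then have "sup (x (A (Suc k))) (inf (x (B k)) (x C)) \<le> sup (x (A (Suc (Suc k)))) (inf (x (B (Suc k))) (x C))"
      using xa[of "Suc k"] by (rule sup_mono[rotated])
    then show ?thesis using Suc by (simp only: x1_def jk.case nat.case)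
  qed
  have sb: "x1 x (B n) \<le> x1 x (B (Suc n))" for n
  proof (cases n)
    case 0 then show ?thesis using xb[of 0] by (simp add: x1_def le_supI1)
  next
    case (Suc k)
    have "inf (x (A k)) (x C) \<le> inf (x (A (Suc k))) (x C)"
      using xa[of k] by (meson inf_mono order_refl)
    then have "sup (x (B (Suc k))) (inf (x (A k)) (x C)) \<le> sup (x (B (Suc (Suc k)))) (inf (x (A (Suc k))) (x C))"
      using xb[of "Suc k"] by (rule sup_mono[rotated])
    then show ?thesis using Suc by (simp only: x1_def jk.case nat.case)
  qed
  have ma: "n \<le> m \<Longrightarrow> x1 x (A n) \<le> x1 x (A m)" for n m
    using lift_Suc_mono_le[of "\<lambda>n. x1 x (A n)", OF sa] by blast
  have mb: "n \<le> m \<Longrightarrow> x1 x (B n) \<le> x1 x (B m)" for n m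
    using lift_Suc_mono_le[of "\<lambda>n. x1 x (B n)", OF sb] by blast
  show ?thesis unfolding antitone_jk_def jk_le_def using ma mb by auto
qed

theorem lemma5p1:
  fixes h :: nat and x :: "jk \<Rightarrow> 'a::bounded_lattice_bot"
  assumes "0 < h"
    and "h_modular TYPE('a) h"
    and "x \<in> AA"
  shows "x1 x \<in> AA"
  using assms(3) x1_fin x1_anti unfolding AA_def by blast

end
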